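(* Up to multiplication by a positive integer, every basic weight of a basic system of type $G_2$ is one of the following (coordinates $\lambda_k=\langle\lambda,e_k\rangle$): (1) $(G_2,1,1)$: $(-1,1,0)$, $(-1,0,1)$; (2) $(G_2,1,2)$: $(-1,2,-1)$, $(-1,-1,2)$, $(-2,1,1)$; (3) $(G_2,2,1)$: $(1,0,-1)$, $(1,-1,0)$, $(0,-1,1)$; (4) $(G_2,2,2)$: $(1,-2,1)$, $(2,-1,-1)$.
   Context: $G_2$ is realized in the plane $\{x_1+x_2+x_3=0\}$ of $\mathbb R^3$ with orthonormal basis $e_1,e_2,e_3$ and standard inner product, simple roots $\alpha_1=e_1-e_2$, $\alpha_2=-2e_1+e_2+e_3$. Let $W$ be the Weyl group, $\alpha^\vee=2\alpha/\langle\alpha,\alpha\rangle$. A weight is integral if $\langle\lambda,\alpha^\vee\rangle\in\mathbb Z$ for all roots $\alpha$; $\overline\lambda$ is the dominant weight in $W\lambda$. For $I=\Delta\setminus\{\alpha_i\}$, $J=\Delta\setminus\{\alpha_j\}$, a basic weight of $(\Phi,i,j)$ is an integral $\lambda$ with $\langle\lambda,\alpha^\vee\rangle\in\mathbb Z_{>0}$ for all $\alpha\in I$ and $\{\alpha\in\Delta:\langle\overline\lambda,\alpha\rangle=0\}=J$; $(\Phi,i,j)$ is a basic system if it has a basic weight. *)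

theory Defs
  imports "HOL-Analysis.Analysis"
begin

text \<open>G2 realised in the plane x1+x2+x3=0 of R^3 (vectors of type real^3).\<close>

definition ev :: "nat \<Rightarrow> real^3" where
  "ev k = axis (of_nat k) 1"

definition vec3 :: "real \<Rightarrow> real \<Rightarrow> real \<Rightarrow> real^3" where
  "vec3 a b c = (\<chi> k. if k = 1 then a else if k = 2 then b else c)"

definition in_plane :: "real^3 \<Rightarrow> bool" where
  "in_plane v \<longleftrightarrow> v $ 1 + v $ 2 + v $ 3 = 0"

definition G2_roots :: "(real^3) set" where
  "G2_roots = {ev a - ev b | a b. a \<in> {1,2,3} \<and> b \<in> {1,2,3} \<and> a \<noteq> b}
      \<union> {s *\<^sub>R (2 *\<^sub>R ev a - ev b - ev c) | s a b c. s \<in> {1, -1} \<and>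
            {a, b, c} = {1,2,3::nat}}"

definition G2_simple :: "nat \<Rightarrow> real^3" where
  "G2_simple k = (if k = 1 then ev 1 - ev 2 else - 2 *\<^sub>R ev 1 + ev 2 + ev 3)"

definition G2_Delta :: "(real^3) set" where
  "G2_Delta = {G2_simple 1, G2_simple 2}"

definition coroot :: "real^3 \<Rightarrow> real^3" where
  "coroot \<alpha> = (2 / (\<alpha> \<bullet> \<alpha>)) *\<^sub>R \<alpha>"

definition refl :: "real^3 \<Rightarrow> real^3 \<Rightarrow> real^3" where
  "refl \<alpha> v = v - (v \<bullet> coroot \<alpha>) *\<^sub>R \<alpha>"

inductive_set G2_Weyl :: "(real^3 \<Rightarrow> real^3) set" where
  id: "id \<in> G2_Weyl"
| step: "w \<in> G2_Weyl \<Longrightarrow> \<alpha> \<in> G2_roots \<Longrightarrow> refl \<alpha> \<circ> w \<in> G2_Weyl"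

definition integral_weight :: "real^3 \<Rightarrow> bool" where
  "integral_weight lam \<longleftrightarrow> (\<forall>\<alpha>\<in>G2_roots. lam \<bullet> coroot \<alpha> \<in> \<int>)"

definition dominant :: "real^3 \<Rightarrow> bool" where
  "dominant \<mu> \<longleftrightarrow> (\<forall>\<alpha>\<in>G2_Delta. \<mu> \<bullet> \<alpha> \<ge> 0)"

definition dom_rep :: "real^3 \<Rightarrow> real^3" where
  "dom_rep lam = (THE \<mu>. \<mu> \<in> (%w. w lam) ` G2_Weyl \<and> dominant \<mu>)"

text \<open>Basic weight of (G2, i, j), with I = Delta - {alpha_i}, J = Delta - {alpha_j}.\<close>
definition basic_weight_G2 :: "nat \<Rightarrow> nat \<Rightarrow> real^3 \<Rightarrow> bool" where
  "basic_weight_G2 i j lam \<longleftrightarrow>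
     in_plane lam \<and> integral_weight lam \<and>
     (\<forall>\<alpha>\<in>G2_Delta - {G2_simple i}. lam \<bullet> coroot \<alpha> \<in> \<int> \<and> lam \<bullet> coroot \<alpha> > 0) \<and>
     {\<alpha>\<in>G2_Delta. dom_rep lam \<bullet> \<alpha> = 0} = G2_Delta - {G2_simple j}"

definition G2_basic_list :: "nat \<Rightarrow> nat \<Rightarrow> (real^3) set" where
  "G2_basic_list i j =
    (if i = 1 \<and> j = 1 then {vec3 (-1) 1 0, vec3 (-1) 0 1}
     else if i = 1 \<and> j = 2 then {vec3 (-1) 2 (-1), vec3 (-1) (-1) 2, vec3 (-2) 1 1}
     else if i = 2 \<and> j = 1 then {vec3 1 0 (-1), vec3 1 (-1) 0, vec3 0 (-1) 1}
     else {vec3 1 (-2) 1, vec3 2 (-1) (-1)})"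

end

theory Submission
  imports Defs
begin



lemma vec3_nth[simp]: "vec3 a b c $ 1 = a" "vec3 a b c $ 2 = b" "vec3 a b c $ 3 = c"
  by (simp_all add: vec3_def)

lemma vec3_eq[simp]: "vec3 a b c = vec3 d e f \<longleftrightarrow> a = d \<and> b = e \<and> c = f"
  by (auto simp: vec_eq_iff forall_3)

lemma vec3_expand: "v = vec3 (v$1) (v$2) (v$3)"
  by (simp add: vec_eq_iff forall_3)

lemma vec3_add[simp]: "vec3 a b c + vec3 d e f = vec3 (a+d) (b+e) (c+f)"
  by (simp add: vec_eq_iff forall_3)
lemma vec3_diff[simp]: "vec3 a b c - vec3 d e f = vec3 (a-d) (b-e) (c-f)"
  by (simp add: vec_eq_iff forall_3)
lemma vec3_scale[simp]: "s *\<^sub>R vec3 a b c = vec3 (s*a) (s*b) (s*c)"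
  by (simp add: vec_eq_iff forall_3)
lemma vec3_uminus[simp]: "- vec3 a b c = vec3 (-a) (-b) (-c)"
  by (simp add: vec_eq_iff forall_3)
lemma vec3_inner[simp]: "vec3 a b c \<bullet> vec3 d e f = a*d + b*e + c*f"
  by (simp add: inner_vec_def sum_3)

lemma ev_vals[simp]: "ev 1 = vec3 1 0 0" "ev 2 = vec3 0 1 0" "ev 3 = vec3 0 0 1"
  by (simp_all add: ev_def vec_eq_iff forall_3 axis_def)

lemma ev_Suc0[simp]: "ev (Suc 0) = vec3 1 0 0" using ev_vals(1) by simp



lemma perm3: fixes a b c :: nat
  assumes "a \<in> {1,2,3}" "b \<in> {1,2,3}" "c \<in> {1,2,3}" "1 \<in> {a,b,c}" "2 \<in> {a,b,c}" "3 \<in> {a,b,c}"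
  shows "(a,b,c) \<in> {(1,2,3),(1,3,2),(2,1,3),(2,3,1),(3,1,2),(3,2,1)}"
  using assms(1,2,3) apply (elim insertE emptyE) using assms(4-6) by simp_all



lemma set3_facts:
  assumes "{a,b,c} = {1,2,3::nat}"
  shows "a \<in> {1,2,3}" "b \<in> {1,2,3}" "c \<in> {1,2,3}" "1 \<in> {a,b,c}" "2 \<in> {a,b,c}" "3 \<in> {a,b,c}"
proof -
  show "a \<in> {1,2,3}" using assms by (metis insertI1)
  show "b \<in> {1,2,3}" using assms by (metis insertI1 insertI2)
  show "c \<in> {1,2,3}" using assms by (metis insertI1 insertI2)
  show "1 \<in> {a,b,c}" "2 \<in> {a,b,c}" "3 \<in> {a,b,c}" unfolding assms by simp_all
qed

lemma roots_explicit: "\<alpha> \<in> G2_roots \<Longrightarrow> \<alpha> \<in> {vec3 1 (-1) 0, vec3 (-1) 1 0, vec3 1 0 (-1), vec3 (-1) 0 1,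
   vec3 0 1 (-1), vec3 0 (-1) 1, vec3 2 (-1) (-1), vec3 (-2) 1 1, vec3 (-1) 2 (-1), vec3 1 (-2) 1,
   vec3 (-1) (-1) 2, vec3 1 1 (-2)}"
proof -
  assume "\<alpha> \<in> G2_roots"
  then consider (s) a b where "\<alpha> = ev a - ev b" "a \<in> {1,2,3}" "b \<in> {1,2,3}" "a \<noteq> b"
    | (l) s a b c where "\<alpha> = s *\<^sub>R (2 *\<^sub>R ev a - ev b - ev c)" "s \<in> {1,-1}" "{a,b,c} = {1,2,3::nat}"
    unfolding G2_roots_def by blast
  then show ?thesis
  proof cases
    case s then show ?thesis by (auto simp del: vec3_eq)
  next
    case l
    note f = set3_facts[OF l(3)]
    have ss: "s = 1 \<or> s = -1" using l(2) by simp
    have "(a,b,c) \<in> {(1,2,3),(1,3,2),(2,1,3),(2,3,1),(3,1,2),(3,2,1)}"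
      using perm3[OF f] .
    then show ?thesis using ss unfolding l(1)
      by (elim insertE emptyE disjE; simp del: vec3_eq)
  qed
qed



lemma refl_gen: "refl (vec3 p q r) (vec3 x y z) =
   vec3 x y z - ((x*p+y*q+z*r) * (2 / (p*p+q*q+r*r))) *\<^sub>R vec3 p q r"
proof -
  have "refl \<alpha> v = v - ((v \<bullet> \<alpha>) * (2 / (\<alpha> \<bullet> \<alpha>))) *\<^sub>R \<alpha>" for \<alpha> v
    by (simp add: refl_def coroot_def mult.commute)
  then show ?thesis by (simp only: vec3_inner)
qed

lemma refl_vals:
  assumes "x+y+z = 0"
  shows "refl (vec3 1 (-1) 0) (vec3 x y z) = vec3 y x z"
    "refl (vec3 (-1) 1 0) (vec3 x y z) = vec3 y x z"
    "refl (vec3 1 0 (-1)) (vec3 x y z) = vec3 z y x"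
    "refl (vec3 (-1) 0 1) (vec3 x y z) = vec3 z y x"
    "refl (vec3 0 1 (-1)) (vec3 x y z) = vec3 x z y"
    "refl (vec3 0 (-1) 1) (vec3 x y z) = vec3 x z y"
    "refl (vec3 2 (-1) (-1)) (vec3 x y z) = vec3 (-x) (-z) (-y)"
    "refl (vec3 (-2) 1 1) (vec3 x y z) = vec3 (-x) (-z) (-y)"
    "refl (vec3 (-1) 2 (-1)) (vec3 x y z) = vec3 (-z) (-y) (-x)"
    "refl (vec3 1 (-2) 1) (vec3 x y z) = vec3 (-z) (-y) (-x)"
    "refl (vec3 (-1) (-1) 2) (vec3 x y z) = vec3 (-y) (-x) (-z)"
    "refl (vec3 1 1 (-2)) (vec3 x y z) = vec3 (-y) (-x) (-z)"
  using assms unfolding refl_gen by (simp_all add: field_simps; linarith)+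

lemma refl_in:
  assumes "\<alpha> \<in> G2_roots" "x+y+z = 0"
  shows "refl \<alpha> (vec3 x y z) \<in> {vec3 y x z, vec3 z y x, vec3 x z y,
      vec3 (-y) (-x) (-z), vec3 (-z) (-y) (-x), vec3 (-x) (-z) (-y)}"
  using roots_explicit[OF assms(1)]
  by (elim insertE emptyE; simp only: refl_vals[OF assms(2)]; simp del: vec3_eq)

definition SP :: "real \<Rightarrow> real \<Rightarrow> real \<Rightarrow> (real^3) set" where
  "SP a b c = {vec3 a b c, vec3 a c b, vec3 b a c, vec3 b c a, vec3 c a b, vec3 c b a,
     vec3 (-a) (-b) (-c), vec3 (-a) (-c) (-b), vec3 (-b) (-a) (-c), vec3 (-b) (-c) (-a),
     vec3 (-c) (-a) (-b), vec3 (-c) (-b) (-a)}"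

lemma SP_closed:
  assumes "a+b+c = 0" "vec3 x y z \<in> SP a b c"
  shows "x+y+z = 0 \<and> {vec3 y x z, vec3 z y x, vec3 x z y,
      vec3 (-y) (-x) (-z), vec3 (-z) (-y) (-x), vec3 (-x) (-z) (-y)} \<subseteq> SP a b c"
  using assms(2) unfolding SP_def
  apply (elim insertE emptyE; simp only: vec3_eq; elim conjE; hypsubst)
  using assms(1) by (simp del: vec3_eq; linarith)+




lemma orbit_sub:
  assumes "a+b+c = 0" "w \<in> G2_Weyl"
  shows "w (vec3 a b c) \<in> SP a b c"
  using assms(2)
proof induction
  case id
  then show ?case by (simp add: SP_def del: vec3_eq)
next
  case (step w \<alpha>)
  obtain x y z where u: "w (vec3 a b c) = vec3 x y z" using vec3_expand by metis
  have c: "x+y+z = 0 \<and> {vec3 y x z, vec3 z y x, vec3 x z y,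
      vec3 (-y) (-x) (-z), vec3 (-z) (-y) (-x), vec3 (-x) (-z) (-y)} \<subseteq> SP a b c"
    using SP_closed[OF assms(1)] step.IH u by metis
  have "refl \<alpha> (vec3 x y z) \<in> SP a b c"
    using refl_in[OF step.hyps(2)] c by blast
  then show ?case using u by simp
qed

lemma root_s12: "vec3 1 (-1) 0 \<in> G2_roots"
  unfolding G2_roots_def by (rule UnI1, rule CollectI, rule exI[of _ 1], rule exI[of _ 2]) simp
lemma root_s13: "vec3 1 0 (-1) \<in> G2_roots"
  unfolding G2_roots_def by (rule UnI1, rule CollectI, rule exI[of _ 1], rule exI[of _ 3]) simp
lemma root_s23: "vec3 0 1 (-1) \<in> G2_roots"
  unfolding G2_roots_def by (rule UnI1, rule CollectI, rule exI[of _ 2], rule exI[of _ 3]) simp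
lemma root_l1: "vec3 2 (-1) (-1) \<in> G2_roots"
  unfolding G2_roots_def by (rule UnI2, rule CollectI, rule exI[of _ 1], rule exI[of _ 1],
     rule exI[of _ 2], rule exI[of _ 3]) (simp add: insert_commute)
lemma root_l2: "vec3 (-1) 2 (-1) \<in> G2_roots"
  unfolding G2_roots_def by (rule UnI2, rule CollectI, rule exI[of _ 1], rule exI[of _ 2],
     rule exI[of _ 1], rule exI[of _ 3]) (simp add: insert_commute)
lemma root_l3: "vec3 (-1) (-1) 2 \<in> G2_roots"
  unfolding G2_roots_def by (rule UnI2, rule CollectI, rule exI[of _ 1], rule exI[of _ 3],
     rule exI[of _ 1], rule exI[of _ 2]) (simp add: insert_commute)

definition orb :: "real^3 \<Rightarrow> (real^3) set" where
  "orb l = (\<lambda>w. w l) ` G2_Weyl"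

lemma orb_refl: "u \<in> orb l \<Longrightarrow> \<alpha> \<in> G2_roots \<Longrightarrow> refl \<alpha> u \<in> orb l"
proof -
  assume "u \<in> orb l" "\<alpha> \<in> G2_roots"
  then obtain w where "w \<in> G2_Weyl" "u = w l" unfolding orb_def by blast
  then show ?thesis unfolding orb_def
    using G2_Weyl.step[OF _ \<open>\<alpha> \<in> G2_roots\<close>] by (intro image_eqI[of _ _ "refl \<alpha> \<circ> w"]) auto
qed

lemma orb_self: "l \<in> orb l"
  unfolding orb_def using G2_Weyl.id by (intro image_eqI[of _ _ id]) auto

lemma orb_ops:
  assumes "vec3 x y z \<in> orb l" "x+y+z=0"
  shows "vec3 y x z \<in> orb l" "vec3 z y x \<in> orb l" "vec3 x z y \<in> orb l"
    "vec3 (-x) (-y) (-z) \<in> orb l"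
proof -
  show "vec3 y x z \<in> orb l" using orb_refl[OF assms(1) root_s12] refl_vals[OF assms(2)] by simp
  show "vec3 z y x \<in> orb l" using orb_refl[OF assms(1) root_s13] refl_vals[OF assms(2)] by simp
  show 1: "vec3 x z y \<in> orb l" using orb_refl[OF assms(1) root_s23] refl_vals[OF assms(2)] by simp
  have "x+z+y = 0" using assms(2) by simp
  then show "vec3 (-x) (-y) (-z) \<in> orb l" using orb_refl[OF 1 root_l1] refl_vals by simp
qed

lemma orbit_eq:
  assumes "a+b+c = 0"
  shows "orb (vec3 a b c) = SP a b c"
proof
  show "orb (vec3 a b c) \<subseteq> SP a b c" unfolding orb_def using orbit_sub[OF assms] by blast
next
  let ?O = "orb (vec3 a b c)"
  have p1: "vec3 a b c \<in> ?O" by (rule orb_self)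
  have p2: "vec3 b a c \<in> ?O" "vec3 c b a \<in> ?O" "vec3 a c b \<in> ?O"
    using orb_ops[OF p1 assms] by auto
  have e2: "a+c+b = 0" using assms by simp
  have p3: "vec3 b c a \<in> ?O" "vec3 c a b \<in> ?O"
    using orb_ops[OF p2(3) e2] by auto
  have e3: "b+a+c=0" "c+b+a=0" "b+c+a=0" "c+a+b=0" using assms by simp_all
  have n: "vec3 (-a) (-b) (-c) \<in> ?O" "vec3 (-b) (-a) (-c) \<in> ?O" "vec3 (-c) (-b) (-a) \<in> ?O"
    "vec3 (-a) (-c) (-b) \<in> ?O" "vec3 (-b) (-c) (-a) \<in> ?O" "vec3 (-c) (-a) (-b) \<in> ?O"
    using orb_ops(4)[OF p1 assms] orb_ops(4)[OF p2(1) e3(1)] orb_ops(4)[OF p2(2) e3(2)]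
      orb_ops(4)[OF p2(3) e2] orb_ops(4)[OF p3(1) e3(3)] orb_ops(4)[OF p3(2) e3(4)] by auto
  show "SP a b c \<subseteq> ?O" unfolding SP_def using p1 p2 p3 n by blast
qed




lemma simple_vals[simp]: "G2_simple 1 = vec3 1 (-1) 0" "G2_simple 2 = vec3 (-2) 1 1"
  by (simp_all add: G2_simple_def)

lemma simple_Suc0[simp]: "G2_simple (Suc 0) = vec3 1 (-1) 0"
  by (simp add: G2_simple_def)

lemma dominant_vec3: "dominant (vec3 x y z) \<longleftrightarrow> x - y \<ge> 0 \<and> -2*x+y+z \<ge> 0"
  by (simp add: dominant_def G2_Delta_def mult.commute)

lemma dom_exists:
  assumes "a+b+c=0" shows "\<exists>u\<in>SP a b c. dominant u"
  using assms unfolding SP_def by (simp add: dominant_vec3 del: vec3_eq) smt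

lemma dom_unique:
  assumes "a+b+c=0" "u \<in> SP a b c" "v \<in> SP a b c" "dominant u" "dominant v"
  shows "u = v"
  using assms(2,3,4,5) unfolding SP_def
  apply (elim insertE emptyE; hypsubst; simp only: dominant_vec3 vec3_eq)
  using assms(1) by linarith+

lemma dom_rep_prop:
  assumes "a+b+c=0"
  shows "dom_rep (vec3 a b c) \<in> SP a b c \<and> dominant (dom_rep (vec3 a b c))"
proof -
  have "\<exists>!\<mu>. \<mu> \<in> (%w. w (vec3 a b c)) ` G2_Weyl \<and> dominant \<mu>"
    using dom_exists[OF assms] dom_unique[OF assms] orbit_eq[OF assms] unfolding orb_def
    by metis
  from theI'[OF this] show ?thesis
    unfolding dom_rep_def using orbit_eq[OF assms] unfolding orb_def by simp
qed




lemma final11: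
  assumes "a+b+c=0" "vec3 x y z \<in> SP a b c" "x-y\<ge>0" "-2*x+y+z\<ge>0"
    "-a>0" "-2*x+y+z=0" "x-y\<noteq>0"
  shows "\<exists>t\<in>{a,-a,b,-b,c,-c}. t>0 \<and> (\<exists>v\<in>G2_basic_list 1 1. vec3 a b c = t *\<^sub>R v)"
  using assms unfolding SP_def G2_basic_list_def by simp smt

lemma final12:
  assumes "a+b+c=0" "vec3 x y z \<in> SP a b c" "x-y\<ge>0" "-2*x+y+z\<ge>0"
    "-a>0" "x-y=0" "-2*x+y+z\<noteq>0"
  shows "\<exists>t\<in>{a,-a,b,-b,c,-c}. t>0 \<and> (\<exists>v\<in>G2_basic_list 1 2. vec3 a b c = t *\<^sub>R v)"
  using assms unfolding SP_def G2_basic_list_def by simp smt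

lemma final21:
  assumes "a+b+c=0" "vec3 x y z \<in> SP a b c" "x-y\<ge>0" "-2*x+y+z\<ge>0"
    "a-b>0" "-2*x+y+z=0" "x-y\<noteq>0"
  shows "\<exists>t\<in>{a,-a,b,-b,c,-c}. t>0 \<and> (\<exists>v\<in>G2_basic_list 2 1. vec3 a b c = t *\<^sub>R v)"
  using assms unfolding SP_def G2_basic_list_def by simp smt

lemma final22:
  assumes "a+b+c=0" "vec3 x y z \<in> SP a b c" "x-y\<ge>0" "-2*x+y+z\<ge>0"
    "a-b>0" "x-y=0" "-2*x+y+z\<noteq>0"
  shows "\<exists>t\<in>{a,-a,b,-b,c,-c}. t>0 \<and> (\<exists>v\<in>G2_basic_list 2 2. vec3 a b c = t *\<^sub>R v)"
  using assms unfolding SP_def G2_basic_list_def by simp smt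




lemma coroot_vals:
  "vec3 a b c \<bullet> coroot (vec3 2 (-1) (-1)) = (2*a-b-c)/3"
  "vec3 a b c \<bullet> coroot (vec3 (-1) 2 (-1)) = (2*b-a-c)/3"
  "vec3 a b c \<bullet> coroot (vec3 (-1) (-1) 2) = (2*c-a-b)/3"
  "vec3 a b c \<bullet> coroot (vec3 (-2) 1 1) = (b+c-2*a)/3"
  "vec3 a b c \<bullet> coroot (vec3 1 (-1) 0) = a - b"
  by (simp_all add: coroot_def field_simps)

lemma nat_of: assumes "t \<in> \<int>" "t > 0" shows "\<exists>n::nat. n > 0 \<and> t = real n"
proof -
  obtain k where k: "t = of_int k" using assms(1) Ints_cases by blast
  then have "k > 0" using assms(2) by simp
  then show ?thesis using k by (intro exI[of _ "nat k"]) simp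
qed

theorem theorem5p13:
  fixes i j :: nat and lam :: "real^3"
  assumes "i \<in> {1, 2}" and "j \<in> {1, 2}" and "basic_weight_G2 i j lam"
  shows "\<exists>n::nat. n > 0 \<and> (\<exists>v\<in>G2_basic_list i j. lam = real n *\<^sub>R v)"
proof -
  define a b c where "a = lam$1" "b = lam$2" "c = lam$3"
  have lam: "lam = vec3 a b c" unfolding a_b_c_def by (rule vec3_expand)
  note bw = assms(3)[unfolded basic_weight_G2_def lam]
  have pl: "a+b+c = 0" using bw unfolding in_plane_def by simp
  have iw: "\<forall>\<alpha>\<in>G2_roots. vec3 a b c \<bullet> coroot \<alpha> \<in> \<int>" using bw unfolding integral_weight_def by simp
  have aZ: "a \<in> \<int>"   proof -
    have "(2*a-b-c)/3 \<in> \<int>" using iw root_l1 coroot_vals(1) by metis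
    moreover have "(2*a-b-c)/3 = a" using pl using pl by (simp add: field_simps; linarith)
    ultimately show ?thesis by simp
  qed
  have "(2*b-a-c)/3 \<in> \<int>" using iw root_l2 coroot_vals(2) by metis
  moreover have "(2*b-a-c)/3 = b" using pl using pl by (simp add: field_simps; linarith)
  ultimately have bZ: "b \<in> \<int>" by simp
  have "(2*c-a-b)/3 \<in> \<int>" using iw root_l3 coroot_vals(3) by metis
  moreover have "(2*c-a-b)/3 = c" using pl using pl by (simp add: field_simps; linarith)
  ultimately have cZ: "c \<in> \<int>" by simp
  have s12: "G2_simple 1 \<noteq> G2_simple 2" by simp
  have D: "G2_Delta = {G2_simple 1, G2_simple 2}" by (simp add: G2_Delta_def)
  have icond: "(i = 1 \<and> -a > 0) \<or> (i = 2 \<and> a - b > 0)"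
  proof (cases "i = 1")
    case True
    then have "G2_simple 2 \<in> G2_Delta - {G2_simple i}" using s12 D by auto
    then have "vec3 a b c \<bullet> coroot (vec3 (-2) 1 1) > 0" using bw by simp
    then have "(b+c-2*a)/3 > 0" by (simp only: coroot_vals)
    moreover have "(b+c-2*a)/3 = -a" using pl using pl by (simp add: field_simps; linarith)
    ultimately show ?thesis using True by simp
  next
    case False
    then have i2: "i = 2" using assms(1) by simp
    then have "G2_simple 1 \<in> G2_Delta - {G2_simple i}" using s12 D by auto
    then have "vec3 a b c \<bullet> coroot (vec3 1 (-1) 0) > 0" using bw by simp
    then show ?thesis using i2 by (simp only: coroot_vals) simp
  qed
  obtain x y z where mu: "dom_rep (vec3 a b c) = vec3 x y z" using vec3_expand by metis
  have muSP: "vec3 x y z \<in> SP a b c" and mudom: "dominant (vec3 x y z)"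
    using dom_rep_prop[OF pl] mu by auto
  have dx: "x - y \<ge> 0" "-2*x+y+z \<ge> 0" using mudom by (simp_all add: dominant_vec3)
  have Jset: "{\<alpha>\<in>G2_Delta. vec3 x y z \<bullet> \<alpha> = 0} = G2_Delta - {G2_simple j}"
    using bw mu by simp
  have jcond: "(j = 1 \<and> -2*x+y+z = 0 \<and> x-y \<noteq> 0) \<or> (j = 2 \<and> x-y = 0 \<and> -2*x+y+z \<noteq> 0)"
  proof (cases "j = 1")
    case True
    then have "G2_simple 2 \<in> {\<alpha>\<in>G2_Delta. vec3 x y z \<bullet> \<alpha> = 0}"
      "G2_simple 1 \<notin> {\<alpha>\<in>G2_Delta. vec3 x y z \<bullet> \<alpha> = 0}" using Jset s12 D by auto
    then show ?thesis using True by (simp add: algebra_simps G2_Delta_def)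
  next
    case False
    then have j2: "j = 2" using assms(2) by simp
    then have "G2_simple 1 \<in> {\<alpha>\<in>G2_Delta. vec3 x y z \<bullet> \<alpha> = 0}"
      "G2_simple 2 \<notin> {\<alpha>\<in>G2_Delta. vec3 x y z \<bullet> \<alpha> = 0}" using Jset s12 D by auto
    then show ?thesis using j2 by (simp add: algebra_simps G2_Delta_def)
  qed
  have "\<exists>t\<in>{a,-a,b,-b,c,-c}. t>0 \<and> (\<exists>v\<in>G2_basic_list i j. vec3 a b c = t *\<^sub>R v)"
    using icond jcond final11[OF pl muSP dx] final12[OF pl muSP dx] final21[OF pl muSP dx]
      final22[OF pl muSP dx] by auto
  then obtain t v where t: "t \<in> {a,-a,b,-b,c,-c}" "t > 0" "v \<in> G2_basic_list i j"
    "vec3 a b c = t *\<^sub>R v" by blast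
  have "t \<in> \<int>" using t(1) aZ bZ cZ by auto
  then obtain n::nat where "n > 0" "t = real n" using nat_of t(2) by blast
  then show ?thesis using t lam by blast
qed


end
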